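(* Let $(N,\underline X)\in\aleph^{FGM*}$ with $\sup A_N\ge2$, and let $\varphi_0,\varphi_1,\varphi_2$ be functions such that all expectations below exist. Define, for a random variable $Y$ with cdf $F_Y$ and survival function $\bar F_Y$ and an integrable $\phi$, $\Delta(F_Y;\phi)=\int\phi(y)\,dF_Y^2(y)-\int\phi(y)\,d(1-\bar F_Y^2(y))=E[\phi(Y_{[2]})]-E[\phi(Y_{[1]})]$. Then $$E[\varphi_0(N)\varphi_1(X_1)\varphi_2(X_2)]=\sum_{(i_0,i_1,i_2)\in\{0,1\}^3}f_{I_0,I_1,I_2}(i_0,i_1,i_2)\,E[\varphi_0(N_{[1+i_0]})]\,E[\varphi_1(X_{[1+i_1]})]\,E[\varphi_2(X_{[1+i_2]})],$$ where $f_{I_0,I_1,I_2}(i_0,i_1,i_2)=\tfrac18\big(1+(-1)^{i_0+i_1}\theta_{01}+(-1)^{i_0+i_2}\theta_{01}+(-1)^{i_1+i_2}\theta_{12}+(-1)^{i_0+i_1+i_2}\theta_{012}\big)$, and equivalently $$E[\varphi_0(N)\varphi_1(X_1)\varphi_2(X_2)]=E[\varphi_0(N)]E[\varphi_1(X)]E[\varphi_2(X)]+\frac{\theta_{01}}{4}\Delta(F_N;\varphi_0)\Big(E[\varphi_1(X_{[2]})]E[\varphi_2(X_{[2]})]-E[\varphi_1(X_{[1]})]E[\varphi_2(X_{[1]})]\Big)$$ $$\qquad+\frac{\theta_{12}}{4}E[\varphi_0(N)]\Delta(F_X;\varphi_1)\Delta(F_X;\varphi_2)-\frac{\theta_{012}}{8}\Delta(F_N;\varphi_0)\Delta(F_X;\varphi_1)\Delta(F_X;\varphi_2).$$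 If moreover $E[\varphi_0(N)]>0$, then $\frac{E[\varphi_0(N)\varphi_1(X_1)\varphi_2(X_2)]}{E[\varphi_0(N)]}$ equals $$E[\varphi_1(X)]E[\varphi_2(X)]+\frac{\theta_{01}}{4}\frac{\Delta(F_N;\varphi_0)}{E[\varphi_0(N)]}\Big(E[\varphi_1(X_{[2]})]E[\varphi_2(X_{[2]})]-E[\varphi_1(X_{[1]})]E[\varphi_2(X_{[1]})]\Big)+\frac{\theta_{12}}{4}\Delta(F_X;\varphi_1)\Delta(F_X;\varphi_2)-\frac{\theta_{012}}{8}\frac{\Delta(F_N;\varphi_0)}{E[\varphi_0(N)]}\Delta(F_X;\varphi_1)\Delta(F_X;\varphi_2).$$
   Context: Collective risk model (CRM): $N$ is a random variable with values in $\mathbb{N}_0$, cdf $F_N$, pmf $\gamma_N(n)=\Pr(N=n)$ and support $A_N=\{n:\gamma_N(n)>0\}$; $\underline X=\{X_j\}_{j\ge1}$ is a sequence of identically distributed strictly positive random variables with common cdf $F_X$ (generic copy $X$). A $d$-variate FGM copula with parameters $\theta_{j_1\dots j_k}$ is $C(u_1,\dots,u_d)=\prod_{m=1}^d u_m\big(1+\sum_{k=2}^d\sum_{j_1<\dots<j_k}\theta_{j_1\dots j_k}\bar u_{j_1}\cdots\bar u_{j_k}\big)$, $\bar u=1-u$, with parameters such that $1+\sum_{k}\sum_{j_1<\dots<j_k}\theta_{j_1\dots j_k}\varepsilon_{j_1}\cdots\varepsilon_{j_k}\ge0$ for all $\varepsilon\in\{-1,1\}^d$. A CRM belongs to $\aleph^{FGM}$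 if for every $k\in\mathbb{N}_1$, $k\le\sup A_N$, $F_{N,X_1,\dots,X_k}(n,x_1,\dots,x_k)=C_k(F_N(n),F_X(x_1),\dots,F_X(x_k))$ for a $(k+1)$-variate FGM copula $C_k$ with coordinates indexed $0,\dots,k$ (index $0$ for $N$). It belongs to $\aleph^{FGM*}$ if in addition $(N,X_1,\dots,X_k)\overset d=(N,X_{\pi(1)},\dots,X_{\pi(k)})$ for all such $k$ and all permutations $\pi$ of $\{1,\dots,k\}$; then the FGM parameters satisfy $\theta_{0j}=\theta_{01}$, $\theta_{ij}=\theta_{12}$ and $\theta_{0ij}=\theta_{012}$ for all $1\le i<j$. For a random variable $Y$, $Y_{[1]}$ and $Y_{[2]}$ denote the minimum and maximum of two iid copies of $Y$. *)

theory Defs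
  imports "HOL-Probability.Probability" "HOL-Combinatorics.Permutations"
begin

definition fgm_index_sets :: "nat \<Rightarrow> nat set set" where
  "fgm_index_sets d = {S. S \<subseteq> {..<d} \<and> 2 \<le> card S}"

definition fgm_valid :: "nat \<Rightarrow> (nat set \<Rightarrow> real) \<Rightarrow> bool" where
  "fgm_valid d \<theta> \<longleftrightarrow>
     (\<forall>\<epsilon>::nat \<Rightarrow> real. (\<forall>j<d. \<epsilon> j = 1 \<or> \<epsilon> j = -1) \<longrightarrow>
        0 \<le> 1 + (\<Sum>S\<in>fgm_index_sets d. \<theta> S * (\<Prod>j\<in>S. \<epsilon> j)))"

definition fgm_copula :: "nat \<Rightarrow> (nat set \<Rightarrow> real) \<Rightarrow> (nat \<Rightarrow> real) \<Rightarrow> real" where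
  "fgm_copula d \<theta> u =
     (\<Prod>m<d. u m) * (1 + (\<Sum>S\<in>fgm_index_sets d. \<theta> S * (\<Prod>j\<in>S. 1 - u j)))"

text \<open>N and X are random variables on the probability space M; only X j for j \<ge> 1 matter.\<close>

definition crm :: "'a measure \<Rightarrow> ('a \<Rightarrow> nat) \<Rightarrow> (nat \<Rightarrow> 'a \<Rightarrow> real) \<Rightarrow> bool" where
  "crm M N X \<longleftrightarrow> prob_space M \<and>
     N \<in> measurable M (count_space UNIV) \<and>
     (\<forall>j\<ge>1. X j \<in> borel_measurable M) \<and>
     (\<forall>j\<ge>1. \<forall>\<omega>\<in>space M. X j \<omega> > 0) \<and>
     (\<forall>j\<ge>1. distr M borel (X j) = distr M borel (X 1))"

definition cdf_N :: "'a measure \<Rightarrow> ('a \<Rightarrow> nat) \<Rightarrow> nat \<Rightarrow> real" where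
  "cdf_N M N n = measure M {\<omega>\<in>space M. N \<omega> \<le> n}"

definition cdf_X :: "'a measure \<Rightarrow> (nat \<Rightarrow> 'a \<Rightarrow> real) \<Rightarrow> real \<Rightarrow> real" where
  "cdf_X M X x = measure M {\<omega>\<in>space M. X 1 \<omega> \<le> x}"

definition support_N :: "'a measure \<Rightarrow> ('a \<Rightarrow> nat) \<Rightarrow> nat set" where
  "support_N M N = {n. measure M {\<omega>\<in>space M. N \<omega> = n} > 0}"

text \<open>For k :: nat and A a set of naturals, k \<le> sup A iff some element of A is \<ge> k.\<close>
definition le_sup_support :: "nat \<Rightarrow> 'a measure \<Rightarrow> ('a \<Rightarrow> nat) \<Rightarrow> bool" where
  "le_sup_support k M N \<longleftrightarrow> (\<exists>n\<in>support_N M N. k \<le> n)"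

definition joint_cdf :: "'a measure \<Rightarrow> ('a \<Rightarrow> nat) \<Rightarrow> (nat \<Rightarrow> 'a \<Rightarrow> real) \<Rightarrow> nat
    \<Rightarrow> nat \<Rightarrow> (nat \<Rightarrow> real) \<Rightarrow> real" where
  "joint_cdf M N X k n x =
     measure M {\<omega>\<in>space M. N \<omega> \<le> n \<and> (\<forall>j\<in>{1..k}. X j \<omega> \<le> x j)}"

text \<open>Membership in aleph^FGM, witnessed by the family theta: theta k is the
 parameter family of the (k+1)-variate FGM copula C_k (index 0 for N).\<close>
definition crm_FGM :: "'a measure \<Rightarrow> ('a \<Rightarrow> nat) \<Rightarrow> (nat \<Rightarrow> 'a \<Rightarrow> real)
    \<Rightarrow> (nat \<Rightarrow> nat set \<Rightarrow> real) \<Rightarrow> bool" where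
  "crm_FGM M N X \<theta> \<longleftrightarrow> crm M N X \<and>
     (\<forall>k\<ge>1. le_sup_support k M N \<longrightarrow>
        fgm_valid (Suc k) (\<theta> k) \<and>
        (\<forall>n x. joint_cdf M N X k n x =
            fgm_copula (Suc k) (\<theta> k) (\<lambda>m. if m = 0 then cdf_N M N n else cdf_X M X (x m))))"

definition crm_FGM_star :: "'a measure \<Rightarrow> ('a \<Rightarrow> nat) \<Rightarrow> (nat \<Rightarrow> 'a \<Rightarrow> real)
    \<Rightarrow> (nat \<Rightarrow> nat set \<Rightarrow> real) \<Rightarrow> bool" where
  "crm_FGM_star M N X \<theta> \<longleftrightarrow> crm_FGM M N X \<theta> \<and>
     (\<forall>k\<ge>1. le_sup_support k M N \<longrightarrow>
        (\<forall>\<pi>. \<pi> permutes {1..k} \<longrightarrow>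
           distr M (count_space UNIV \<Otimes>\<^sub>M (\<Pi>\<^sub>M j\<in>{1..k}. borel))
              (\<lambda>\<omega>. (N \<omega>, \<lambda>j\<in>{1..k}. X (\<pi> j) \<omega>))
         = distr M (count_space UNIV \<Otimes>\<^sub>M (\<Pi>\<^sub>M j\<in>{1..k}. borel))
              (\<lambda>\<omega>. (N \<omega>, \<lambda>j\<in>{1..k}. X j \<omega>))))"

text \<open>For a distribution D of Y, E[phi(Y_[1])] and E[phi(Y_[2])] where Y_[1], Y_[2]
 are min and max of two iid copies of Y.\<close>
definition exp_os :: "'b::linorder measure \<Rightarrow> nat \<Rightarrow> ('b \<Rightarrow> real) \<Rightarrow> real" where
  "exp_os D i \<phi> = (if i = 1 then (\<integral>z. \<phi> (min (fst z) (snd z)) \<partial>(D \<Otimes>\<^sub>M D))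
                    else (\<integral>z. \<phi> (max (fst z) (snd z)) \<partial>(D \<Otimes>\<^sub>M D)))"

definition integrable_os :: "'b::linorder measure \<Rightarrow> ('b \<Rightarrow> real) \<Rightarrow> bool" where
  "integrable_os D \<phi> \<longleftrightarrow> integrable (D \<Otimes>\<^sub>M D) (\<lambda>z. \<phi> (min (fst z) (snd z))) \<and>
                          integrable (D \<Otimes>\<^sub>M D) (\<lambda>z. \<phi> (max (fst z) (snd z)))"

definition Delta :: "'b::linorder measure \<Rightarrow> ('b \<Rightarrow> real) \<Rightarrow> real" where
  "Delta D \<phi> = exp_os D 2 \<phi> - exp_os D 1 \<phi>"

end

theory Submission
  imports Defs
begin


lemma bind_mix:
  fixes K :: "'i \<Rightarrow> 'b measure" and w :: "'i \<Rightarrow> real"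
  assumes I: "finite I" "I \<noteq> {}"
    and K: "\<And>i. i \<in> I \<Longrightarrow> prob_space (K i)" "\<And>i. i \<in> I \<Longrightarrow> sets (K i) = sets S"
    and w: "\<And>i. i \<in> I \<Longrightarrow> 0 \<le> w i"
  defines "Q \<equiv> density (count_space I) (\<lambda>i. ennreal (w i)) \<bind> K"
  shows "sets Q = sets S"
    and "\<And>X. X \<in> sets S \<Longrightarrow> emeasure Q X = (\<Sum>i\<in>I. ennreal (w i) * emeasure (K i) X)"
    and "\<And>h. h \<in> borel_measurable S \<Longrightarrow> (\<integral>\<^sup>+x. h x \<partial>Q) = (\<Sum>i\<in>I. ennreal (w i) * (\<integral>\<^sup>+x. h x \<partial>K i))"
proof -
  have Km: "K \<in> measurable (density (count_space I) (\<lambda>i. ennreal (w i))) (subprob_algebra S)"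
    unfolding measurable_cong_sets[OF sets_density refl] measurable_count_space_eq1
    using K by (auto simp: space_subprob_algebra intro: prob_space_imp_subprob_space)
  have ne: "space (density (count_space I) (\<lambda>i. ennreal (w i))) \<noteq> {}" using I by simp
  show "sets Q = sets S" unfolding Q_def by (rule sets_bind) (use K ne in auto)
  show "\<And>X. X \<in> sets S \<Longrightarrow> emeasure Q X = (\<Sum>i\<in>I. ennreal (w i) * emeasure (K i) X)"
    unfolding Q_def
    by (subst emeasure_bind[OF ne Km], assumption)
       (simp add: nn_integral_density nn_integral_count_space_finite[OF I(1)])
  show "\<And>h. h \<in> borel_measurable S \<Longrightarrow> (\<integral>\<^sup>+x. h x \<partial>Q) = (\<Sum>i\<in>I. ennreal (w i) * (\<integral>\<^sup>+x. h x \<partial>K i))"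
    unfolding Q_def
    by (subst nn_integral_bind[OF _ Km], assumption)
       (simp add: nn_integral_density nn_integral_count_space_finite[OF I(1)])
qed

lemma mix_nonneg:
  fixes h :: "'b \<Rightarrow> real"
  assumes I: "finite I" "I \<noteq> {}"
    and sQ: "sets Q = sets S" and sK: "\<And>i. i \<in> I \<Longrightarrow> sets (K i) = sets S"
    and w: "\<And>i. i \<in> I \<Longrightarrow> 0 \<le> w i"
    and nn: "\<And>h. h \<in> borel_measurable S \<Longrightarrow> (\<integral>\<^sup>+x. h x \<partial>Q) = (\<Sum>i\<in>I. ennreal (w i) * (\<integral>\<^sup>+x. h x \<partial>K i))"
    and int: "\<And>i. i \<in> I \<Longrightarrow> integrable (K i) h"
    and pos: "\<And>x. 0 \<le> h x"
  shows "integrable Q h \<and> integral\<^sup>L Q h = (\<Sum>i\<in>I. w i * integral\<^sup>L (K i) h)"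
proof -
  obtain i0 where i0: "i0 \<in> I" using I by auto
  have hm: "h \<in> borel_measurable S"
    by (metis measurable_cong_sets[OF sK[OF i0] refl] borel_measurable_integrable int i0)
  have hmQ: "h \<in> borel_measurable Q" by (metis hm measurable_cong_sets[OF sQ refl])
  have eqK: "\<And>i. i \<in> I \<Longrightarrow> (\<integral>\<^sup>+x. ennreal (h x) \<partial>K i) = ennreal (integral\<^sup>L (K i) h)"
    by (rule nn_integral_eq_integral) (auto simp: int pos)
  have "(\<integral>\<^sup>+x. ennreal (h x) \<partial>Q) = (\<Sum>i\<in>I. ennreal (w i) * ennreal (integral\<^sup>L (K i) h))"
    using nn[of "\<lambda>x. ennreal (h x)"] hm eqK by simp
  also have "\<dots> = ennreal (\<Sum>i\<in>I. w i * integral\<^sup>L (K i) h)"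
    by (subst sum_ennreal[symmetric]) (auto simp: ennreal_mult w int pos intro!: sum.cong integral_nonneg mult_nonneg_nonneg)
  finally have eq: "(\<integral>\<^sup>+x. ennreal (h x) \<partial>Q) = ennreal (\<Sum>i\<in>I. w i * integral\<^sup>L (K i) h)" .
  have iQ: "integrable Q h"
    by (rule integrableI_nonneg) (use hmQ pos eq in auto)
  have "ennreal (integral\<^sup>L Q h) = ennreal (\<Sum>i\<in>I. w i * integral\<^sup>L (K i) h)"
    using nn_integral_eq_integral[OF iQ] pos eq by simp
  moreover have "0 \<le> (\<Sum>i\<in>I. w i * integral\<^sup>L (K i) h)"
    by (auto simp: w pos intro!: sum_nonneg integral_nonneg mult_nonneg_nonneg)
  ultimately show ?thesis using iQ by (simp add: integral_nonneg pos)
qed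

lemma mix_real:
  fixes g :: "'b \<Rightarrow> real"
  assumes I: "finite I" "I \<noteq> {}"
    and sQ: "sets Q = sets S" and sK: "\<And>i. i \<in> I \<Longrightarrow> sets (K i) = sets S"
    and w: "\<And>i. i \<in> I \<Longrightarrow> 0 \<le> w i"
    and nn: "\<And>h. h \<in> borel_measurable S \<Longrightarrow> (\<integral>\<^sup>+x. h x \<partial>Q) = (\<Sum>i\<in>I. ennreal (w i) * (\<integral>\<^sup>+x. h x \<partial>K i))"
    and int: "\<And>i. i \<in> I \<Longrightarrow> integrable (K i) g"
  shows "integrable Q g \<and> integral\<^sup>L Q g = (\<Sum>i\<in>I. w i * integral\<^sup>L (K i) g)"
proof -
  have p: "integrable Q (\<lambda>x. max (g x) 0) \<and> integral\<^sup>L Q (\<lambda>x. max (g x) 0) = (\<Sum>i\<in>I. w i * integral\<^sup>L (K i) (\<lambda>x. max (g x) 0))"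
    by (rule mix_nonneg[OF I sQ sK w nn]) (auto intro: integrable_max int)
  have n: "integrable Q (\<lambda>x. max (- g x) 0) \<and> integral\<^sup>L Q (\<lambda>x. max (- g x) 0) = (\<Sum>i\<in>I. w i * integral\<^sup>L (K i) (\<lambda>x. max (- g x) 0))"
    by (rule mix_nonneg[OF I sQ sK w nn]) (auto intro!: integrable_max int integrable_minus)
  have geq: "g = (\<lambda>x. max (g x) 0 - max (- g x) 0)" by (auto simp: fun_eq_iff)
  have iQ: "integrable Q g" by (subst geq) (use p n in auto)
  have "integral\<^sup>L Q g = integral\<^sup>L Q (\<lambda>x. max (g x) 0) - integral\<^sup>L Q (\<lambda>x. max (- g x) 0)"
    by (subst geq) (use p n in \<open>simp add: integral_diff\<close>)
  also have "\<dots> = (\<Sum>i\<in>I. w i * (integral\<^sup>L (K i) (\<lambda>x. max (g x) 0) - integral\<^sup>L (K i) (\<lambda>x. max (- g x) 0)))"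
    using p n by (simp add: sum_subtractf right_diff_distrib)
  also have "\<dots> = (\<Sum>i\<in>I. w i * integral\<^sup>L (K i) g)"
  proof (rule sum.cong[OF refl])
    fix i assume i: "i \<in> I"
    have "integral\<^sup>L (K i) g = integral\<^sup>L (K i) (\<lambda>x. max (g x) 0) - integral\<^sup>L (K i) (\<lambda>x. max (- g x) 0)"
      by (subst geq) (use int[OF i] in \<open>simp add: integral_diff integrable_max\<close>)
    then show "w i * (integral\<^sup>L (K i) (\<lambda>x. max (g x) 0) - integral\<^sup>L (K i) (\<lambda>x. max (- g x) 0)) = w i * integral\<^sup>L (K i) g"
      by simp
  qed
  finally show ?thesis using iQ by simp
qed

lemma int_prod2:
  fixes f g :: "_ \<Rightarrow> real"
  assumes A: "prob_space A" and B: "prob_space B" and f: "integrable A f" and g: "integrable B g"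
  shows "integrable (A \<Otimes>\<^sub>M B) (\<lambda>z. f (fst z) * g (snd z)) \<and>
         integral\<^sup>L (A \<Otimes>\<^sub>M B) (\<lambda>z. f (fst z) * g (snd z)) = integral\<^sup>L A f * integral\<^sup>L B g"
proof -
  interpret pair_prob_space A B using A B by (simp add: pair_prob_space_def pair_sigma_finite_def prob_space_imp_sigma_finite)
  have fm[measurable]: "f \<in> borel_measurable A" using f by auto
  have gm[measurable]: "g \<in> borel_measurable B" using g by auto
  have i: "integrable (A \<Otimes>\<^sub>M B) (\<lambda>z. f (fst z) * g (snd z))"
  proof (rule Fubini_integrable)
    show "(\<lambda>z. f (fst z) * g (snd z)) \<in> borel_measurable (A \<Otimes>\<^sub>M B)" by measurable
    have "(\<lambda>x. \<integral> y. norm (f (fst (x, y)) * g (snd (x, y))) \<partial>B) = (\<lambda>x. norm (f x) * (\<integral> y. norm (g y) \<partial>B))"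
      by (simp add: abs_mult)
    then show "integrable A (\<lambda>x. \<integral> y. norm (f (fst (x, y)) * g (snd (x, y))) \<partial>B)"
      using f by (simp add: integrable_norm)
    show "AE x in A. integrable B (\<lambda>y. f (fst (x, y)) * g (snd (x, y)))"
      using g by simp
  qed
  have "integral\<^sup>L (A \<Otimes>\<^sub>M B) (\<lambda>z. f (fst z) * g (snd z)) = (\<integral>x. (\<integral>y. f x * g y \<partial>B) \<partial>A)"
    using integral_fst'[OF i] by simp
  also have "\<dots> = integral\<^sup>L A f * integral\<^sup>L B g" by simp
  finally show ?thesis using i by simp
qed

lemma cdf3_unique:
  fixes P Q :: "(real \<times> real \<times> real) measure"
  assumes sP: "sets P = sets borel" and sQ: "sets Q = sets borel" and fP: "finite_measure P"
    and eq: "\<And>z. emeasure P {..z} = emeasure Q {..z}"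
  shows "P = Q"
proof (rule measure_eqI_generator_eq[where \<Omega>=UNIV and E="range atMost" and A="\<lambda>k. {..(real k, real k, real k)}"])
  show "Int_stable (range atMost :: (real \<times> real \<times> real) set set)"
  proof (clarsimp simp: Int_stable_def)
    fix x y :: "real \<times> real \<times> real"
    have "{..x} \<inter> {..y} = {..inf x y}" by auto
    then show "{..x} \<inter> {..y} \<in> range atMost" by blast
  qed
  show "range atMost \<subseteq> Pow (UNIV :: (real \<times> real \<times> real) set)" by auto
  show "\<And>X. X \<in> range atMost \<Longrightarrow> emeasure P X = emeasure Q X" using eq by auto
  have sb: "sets (borel :: (real \<times> real \<times> real) measure) = sigma_sets UNIV (range atMost)"
    by (subst borel_eq_atMost) (simp add: sets_measure_of)
  show "sets P = sigma_sets UNIV (range atMost)" using sP sb by simp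
  show "sets Q = sigma_sets UNIV (range atMost)" using sQ sb by simp
  show "range (\<lambda>k::nat. {..(real k, real k, real k)}) \<subseteq> range atMost" by auto
  show "(\<Union>k::nat. {..(real k, real k, real k)}) = UNIV"
  proof (intro set_eqI iffI)
    fix z :: "real \<times> real \<times> real"
    obtain a b c where z: "z = (a, b, c)" by (cases z) auto
    obtain k :: nat where "max a (max b c) \<le> real k" using real_arch_simple by blast
    then show "z \<in> (\<Union>k::nat. {..(real k, real k, real k)})"
      by (auto simp: z less_eq_prod_def intro!: exI[of _ k])
  qed auto
  show "\<And>k. emeasure P {..(real k, real k, real k)} \<noteq> \<infinity>"
    using fP by (simp add: finite_measure.emeasure_finite)
qed

lemma L_mix:
  fixes P :: "(real \<times> real \<times> real) measure" and A B :: "nat \<Rightarrow> real measure"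
    and w :: "nat \<times> nat \<times> nat \<Rightarrow> real" and g0 g1 g2 :: "real \<Rightarrow> real"
  assumes I: "finite I" "I \<noteq> {}"
    and P: "prob_space P" "sets P = sets borel"
    and A: "\<And>j. prob_space (A j)" "\<And>j. sets (A j) = sets borel"
    and B: "\<And>j. prob_space (B j)" "\<And>j. sets (B j) = sets borel"
    and w: "\<And>i. i \<in> I \<Longrightarrow> 0 \<le> w i"
    and cdf: "\<And>t x y. measure P {..(t, x, y)} = (\<Sum>i\<in>I. w i * (measure (A (fst i)) {..t} *
                 (measure (B (fst (snd i))) {..x} * measure (B (snd (snd i))) {..y})))"
    and i0: "\<And>j. integrable (A j) g0" and i1: "\<And>j. integrable (B j) g1" and i2: "\<And>j. integrable (B j) g2"
  shows "integrable P (\<lambda>z. g0 (fst z) * (g1 (fst (snd z)) * g2 (snd (snd z)))) \<and>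
         integral\<^sup>L P (\<lambda>z. g0 (fst z) * (g1 (fst (snd z)) * g2 (snd (snd z)))) =
         (\<Sum>i\<in>I. w i * (integral\<^sup>L (A (fst i)) g0 * (integral\<^sup>L (B (fst (snd i))) g1 * integral\<^sup>L (B (snd (snd i))) g2)))"
proof -
  define K where "K i = A (fst i) \<Otimes>\<^sub>M (B (fst (snd i)) \<Otimes>\<^sub>M B (snd (snd i)))" for i
  have Kp: "prob_space (K i)" for i
    unfolding K_def using A B by (intro prob_space_pair) (auto intro: prob_space_pair simp: pair_prob_space_def pair_sigma_finite_def prob_space_imp_sigma_finite)
  have sB2: "sets (B j \<Otimes>\<^sub>M B k) = sets (borel :: (real \<times> real) measure)" for j k
    by (subst borel_prod[symmetric]) (intro sets_pair_measure_cong B)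
  have Ks: "sets (K i) = sets (borel :: (real \<times> real \<times> real) measure)" for i
    unfolding K_def by (subst borel_prod[symmetric]) (intro sets_pair_measure_cong A sB2)
  define Q where "Q = density (count_space I) (\<lambda>i. ennreal (w i)) \<bind> K"
  note bm = bind_mix[OF I, of K "borel :: (real \<times> real \<times> real) measure" w, folded Q_def, OF Kp Ks w]
  have Kcdf: "emeasure (K i) {..(t, x, y)} = ennreal (measure (A (fst i)) {..t} *
                 (measure (B (fst (snd i))) {..x} * measure (B (snd (snd i))) {..y}))" for i t x y
  proof -
    interpret a: prob_space "A (fst i)" by (rule A)
    interpret b: prob_space "B (fst (snd i))" by (rule B)
    interpret c: prob_space "B (snd (snd i))" by (rule B)
    interpret bc: prob_space "B (fst (snd i)) \<Otimes>\<^sub>M B (snd (snd i))"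
      by (intro prob_space_pair) (auto simp: pair_prob_space_def pair_sigma_finite_def prob_space_imp_sigma_finite B)
    have at: "{..(t, x, y)} = {..t} \<times> ({..x} \<times> {..y})" by (auto simp: less_eq_prod_def)
    have s1: "{..t} \<in> sets (A (fst i))" using A(2) by simp
    have s2: "{..x} \<in> sets (B (fst (snd i)))" using B(2) by simp
    have s3: "{..y} \<in> sets (B (snd (snd i)))" using B(2) by simp
    have s23: "{..x} \<times> {..y} \<in> sets (B (fst (snd i)) \<Otimes>\<^sub>M B (snd (snd i)))" using s2 s3 by auto
    show ?thesis unfolding K_def at
      by (simp add: bc.emeasure_pair_measure_Times[OF s1 s23] c.emeasure_pair_measure_Times[OF s2 s3]
            a.emeasure_eq_measure b.emeasure_eq_measure c.emeasure_eq_measure ennreal_mult)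
  qed
  have PQ: "P = Q"
  proof (rule cdf3_unique)
    show "sets P = sets borel" by (rule P(2))
    show "sets Q = sets borel" by (rule bm(1))
    show "finite_measure P" using P(1) by (simp add: prob_space_def)
    fix z :: "real \<times> real \<times> real"
    obtain t x y where z: "z = (t, x, y)" by (cases z) auto
    have "emeasure Q {..z} = (\<Sum>i\<in>I. ennreal (w i) * emeasure (K i) {..z})" by (rule bm(2)) (auto intro: borel_closed)
    also have "\<dots> = ennreal (\<Sum>i\<in>I. w i * (measure (A (fst i)) {..t} *
                 (measure (B (fst (snd i))) {..x} * measure (B (snd (snd i))) {..y})))"
      unfolding z Kcdf
      by (subst sum_ennreal[symmetric]) (auto simp: w ennreal_mult intro!: sum.cong mult_nonneg_nonneg)
    also have "\<dots> = emeasure P {..z}" using cdf z P(1) by (simp add: finite_measure.emeasure_eq_measure prob_space_def)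
    finally show "emeasure P {..z} = emeasure Q {..z}" by simp
  qed
  have Kint: "integrable (K i) (\<lambda>z. g0 (fst z) * (g1 (fst (snd z)) * g2 (snd (snd z)))) \<and>
      integral\<^sup>L (K i) (\<lambda>z. g0 (fst z) * (g1 (fst (snd z)) * g2 (snd (snd z)))) =
      integral\<^sup>L (A (fst i)) g0 * (integral\<^sup>L (B (fst (snd i))) g1 * integral\<^sup>L (B (snd (snd i))) g2)" for i
  proof -
    have bcp: "prob_space (B (fst (snd i)) \<Otimes>\<^sub>M B (snd (snd i)))"
      by (intro prob_space_pair) (auto simp: pair_prob_space_def pair_sigma_finite_def prob_space_imp_sigma_finite B)
    note in2 = int_prod2[OF B(1) B(1) i1 i2, of "fst (snd i)" "snd (snd i)"]
    note in3 = int_prod2[OF A(1) bcp i0 conjunct1[OF in2], of "fst i"]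
    show ?thesis unfolding K_def using in3 in2 by simp
  qed
  have "integrable Q (\<lambda>z. g0 (fst z) * (g1 (fst (snd z)) * g2 (snd (snd z)))) \<and>
     integral\<^sup>L Q (\<lambda>z. g0 (fst z) * (g1 (fst (snd z)) * g2 (snd (snd z)))) =
     (\<Sum>i\<in>I. w i * integral\<^sup>L (K i) (\<lambda>z. g0 (fst z) * (g1 (fst (snd z)) * g2 (snd (snd z)))))"
    by (rule mix_real[OF I bm(1) Ks w bm(3)]) (use Kint in auto)
  then show ?thesis using Kint PQ by simp
qed



lemma fgm_index_sets_3: "fgm_index_sets 3 = {{0,1},{0,2},{1,2},{0,1,2}}"
proof -
  have "fgm_index_sets 3 = {S \<in> Pow {0,1,2}. 2 \<le> card S}"
    unfolding fgm_index_sets_def by (auto simp: numeral_3_eq_3 lessThan_Suc)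
  also have "\<dots> = {{0,1},{0,2},{1,2},{0,1,2}}"
    by (simp add: Pow_insert insert_commute) (auto simp: card_insert_if)
  finally show ?thesis .
qed

lemma sum3: "(\<Sum>i\<in>{0,1::nat}\<times>{0,1::nat}\<times>{0,1::nat}. F i) =
  F (0,0,0) + F (0,0,1) + F (0,1,0) + F (0,1,1) + F (1,0,0) + F (1,0,1) + F (1,1,0) + F (1,1,1)"
  by (simp add: sum.cartesian_product[symmetric] algebra_simps)

definition G :: "nat \<Rightarrow> real \<Rightarrow> real" where
  "G j u = (if j = 0 then 1 - (1 - u)^2 else u^2)"

lemma poly3:
  fixes x y z a b c d :: real
  shows "x * y * z * (1 + a * ((1 - x) * (1 - y)) + b * ((1 - x) * (1 - z)) + c * ((1 - y) * (1 - z)) + d * ((1 - x) * ((1 - y) * (1 - z))))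
   = (1 + a + b + c + d) * ((1 - (1-x)*(1-x)) * ((1 - (1-y)*(1-y)) * (1 - (1-z)*(1-z)))) / 8
   + (1 + a - b - c - d) * ((1 - (1-x)*(1-x)) * ((1 - (1-y)*(1-y)) * (z*z))) / 8
   + (1 - a + b - c - d) * ((1 - (1-x)*(1-x)) * ((y*y) * (1 - (1-z)*(1-z)))) / 8
   + (1 - a - b + c + d) * ((1 - (1-x)*(1-x)) * ((y*y) * (z*z))) / 8
   + (1 - a - b + c - d) * ((x*x) * ((1 - (1-y)*(1-y)) * (1 - (1-z)*(1-z)))) / 8
   + (1 - a + b - c + d) * ((x*x) * ((1 - (1-y)*(1-y)) * (z*z))) / 8
   + (1 + a - b - c + d) * ((x*x) * ((y*y) * (1 - (1-z)*(1-z)))) / 8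
   + (1 + a + b + c - d) * ((x*x) * ((y*y) * (z*z))) / 8"
  by (simp add: field_simps)

lemma copula_mix:
  "fgm_copula 3 th u = (\<Sum>i\<in>{0,1::nat}\<times>{0,1::nat}\<times>{0,1::nat}.
     (1/8) * (1 + (-1)^(fst i + fst (snd i)) * th {0,1} + (-1)^(fst i + snd (snd i)) * th {0,2}
       + (-1)^(fst (snd i) + snd (snd i)) * th {1,2} + (-1)^(fst i + fst (snd i) + snd (snd i)) * th {0,1,2})
     * (G (fst i) (u 0) * (G (fst (snd i)) (u 1) * G (snd (snd i)) (u 2))))"
proof -
  have d: "{0::nat,1} \<noteq> {0,2}" "{0::nat,1} \<noteq> {1,2}" "{0::nat,1} \<noteq> {0,1,2}" "{0::nat,2} \<noteq> {1,2}"
     "{0::nat,2} \<noteq> {0,1,2}" "{1::nat,2} \<noteq> {0,1,2}"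
     "{0::nat,Suc 0} \<noteq> {0,2}" "{0::nat,Suc 0} \<noteq> {Suc 0,2}" "{0::nat,Suc 0} \<noteq> {0,Suc 0,2}"
     "{Suc 0::nat,2} \<noteq> {0,Suc 0,2}" "{0::nat,2} \<noteq> {Suc 0,2}" "{0::nat,2} \<noteq> {0,Suc 0,2}"
     by (auto simp: insert_eq_iff doubleton_eq_iff)
  have l: "fgm_copula 3 th u = u 0 * u 1 * u 2 * (1 + th {0,1} * ((1 - u 0) * (1 - u 1)) + th {0,2} * ((1 - u 0) * (1 - u 2))
     + th {1,2} * ((1 - u 1) * (1 - u 2)) + th {0,1,2} * ((1 - u 0) * ((1 - u 1) * (1 - u 2))))"
  proof -
    have p: "prod u {..<3} = u 0 * u 1 * u 2" by (simp add: numeral_3_eq_3 lessThan_Suc numeral_2_eq_2)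
    show ?thesis unfolding fgm_copula_def fgm_index_sets_3 p using d by (simp add: algebra_simps)
  qed
  show ?thesis
    unfolding l sum3 G_def
    using poly3[of "u 0" "u 1" "u 2" "th {0,1}" "th {0,2}" "th {1,2}" "th {0,1,2}"]
    by (simp add: power2_eq_square)
qed



definition os :: "nat \<Rightarrow> 'b::linorder \<times> 'b \<Rightarrow> 'b" where
  "os j z = (if j = 0 then min (fst z) (snd z) else max (fst z) (snd z))"

lemma measure_pair_Times_prob:
  assumes D: "prob_space D" and A: "A \<in> sets D" and B: "B \<in> sets D"
  shows "measure (D \<Otimes>\<^sub>M D) (A \<times> B) = measure D A * measure D B"
proof -
  interpret prob_space D by (rule D)
  show ?thesis
    unfolding measure_def
    by (simp add: emeasure_pair_measure_Times[OF A B] enn2real_mult)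
qed

lemma os_cdf:
  fixes D :: "'b::linorder measure" and f :: "'b \<Rightarrow> real"
  assumes D: "prob_space D" and f: "mono f" and Sm: "{v\<in>space D. f v \<le> t} \<in> sets D"
  shows "measure (D \<Otimes>\<^sub>M D) {z\<in>space (D \<Otimes>\<^sub>M D). f (os j z) \<le> t} = G j (measure D {v\<in>space D. f v \<le> t})"
proof -
  interpret prob_space D by (rule D)
  interpret DD: prob_space "D \<Otimes>\<^sub>M D"
    by (intro prob_space_pair) (auto simp: pair_prob_space_def pair_sigma_finite_def prob_space_imp_sigma_finite D)
  define S where "S = {v\<in>space D. f v \<le> t}"
  have Sm': "S \<in> sets D" using Sm by (simp add: S_def)
  have maxe: "f (max a b) \<le> t \<longleftrightarrow> f a \<le> t \<and> f b \<le> t" for a b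
    using monoD[OF f, of a b] monoD[OF f, of b a] by (cases "a \<le> b") (auto simp: not_le max_def min_def dest!: less_imp_le)
  have mine: "f (min a b) \<le> t \<longleftrightarrow> f a \<le> t \<or> f b \<le> t" for a b
    using monoD[OF f, of a b] monoD[OF f, of b a] by (cases "a \<le> b") (auto simp: not_le max_def min_def dest!: less_imp_le)
  show ?thesis
  proof (cases "j = 0")
    case True
    have "{z\<in>space (D \<Otimes>\<^sub>M D). f (os j z) \<le> t} = space (D \<Otimes>\<^sub>M D) - (space D - S) \<times> (space D - S)"
      using True by (auto simp: os_def mine S_def space_pair_measure)
    moreover have "(space D - S) \<times> (space D - S) \<in> sets (D \<Otimes>\<^sub>M D)" using Sm' by auto
    ultimately have "measure (D \<Otimes>\<^sub>M D) {z\<in>space (D \<Otimes>\<^sub>M D). f (os j z) \<le> t} =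
        1 - measure D (space D - S) * measure D (space D - S)"
      using DD.prob_compl measure_pair_Times_prob[OF D] Sm' by auto
    also have "\<dots> = G j (measure D S)" using True prob_compl[OF Sm'] by (simp add: G_def power2_eq_square)
    finally show ?thesis by (simp add: S_def)
  next
    case False
    have "{z\<in>space (D \<Otimes>\<^sub>M D). f (os j z) \<le> t} = S \<times> S"
      using False by (auto simp: os_def maxe S_def space_pair_measure)
    then show ?thesis
      using False measure_pair_Times_prob[OF D Sm' Sm'] by (simp add: G_def power2_eq_square S_def)
  qed
qed



lemma alg_key:
  fixes p q r s :: real and eA eC :: "nat \<Rightarrow> real"
  assumes "(\<Sum>i\<in>{0,1::nat}\<times>{0,1::nat}\<times>{0,1::nat}.
     (1/8) * (1 + (-1)^(fst i + fst (snd i)) * p + (-1)^(fst i + snd (snd i)) * q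
       + (-1)^(fst (snd i) + snd (snd i)) * r + (-1)^(fst i + fst (snd i) + snd (snd i)) * s)
     * (eA (1 + fst i) * (1 * eC (1 + snd (snd i))))) =
   (\<Sum>i\<in>{0,1::nat}\<times>{0,1::nat}\<times>{0,1::nat}.
     (1/8) * (1 + (-1)^(fst i + fst (snd i)) * p + (-1)^(fst i + snd (snd i)) * q
       + (-1)^(fst (snd i) + snd (snd i)) * r + (-1)^(fst i + fst (snd i) + snd (snd i)) * s)
     * (eA (1 + fst i) * (eC (1 + fst (snd i)) * 1)))"
  shows "(q - p) * (eA 1 - eA 2) * (eC 1 - eC 2) = 0"
proof -
  have e: "eA (Suc (Suc 0)) = eA 2" "eC (Suc (Suc 0)) = eC 2" by (simp_all add: numeral_2_eq_2)
  show ?thesis using assms unfolding sum3 by (simp add: field_simps e)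
qed

lemma alg_main:
  fixes p q r s :: real and eA eB eC :: "nat \<Rightarrow> real"
  assumes key: "(q - p) * (eA 1 - eA 2) * (eC 1 - eC 2) = 0"
  shows "(\<Sum>i\<in>{0,1::nat}\<times>{0,1::nat}\<times>{0,1::nat}.
     (1/8) * (1 + (-1)^(fst i + fst (snd i)) * p + (-1)^(fst i + snd (snd i)) * q
       + (-1)^(fst (snd i) + snd (snd i)) * r + (-1)^(fst i + fst (snd i) + snd (snd i)) * s)
     * (eA (1 + fst i) * (eB (1 + fst (snd i)) * eC (1 + snd (snd i))))) =
    (\<Sum>i0\<in>{0,1::nat}. \<Sum>i1\<in>{0,1::nat}. \<Sum>i2\<in>{0,1::nat}.
              (1/8) * (1 + (-1)^(i0+i1) * p + (-1)^(i0+i2) * p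
                         + (-1)^(i1+i2) * r + (-1)^(i0+i1+i2) * s)
              * eA (1+i0) * eB (1+i1) * eC (1+i2))"
proof -
  have k2: "(q - p) * (eA 1 - eA 2) * (eC 1 - eC 2) * (eB 1 + eB 2) = 0" using key by simp
  have e: "eA (Suc (Suc 0)) = eA 2" "eB (Suc (Suc 0)) = eB 2" "eC (Suc (Suc 0)) = eC 2" by (simp_all add: numeral_2_eq_2)
  show ?thesis unfolding sum3 using k2 by (simp add: field_simps e)
qed

lemma alg_second:
  fixes p r s :: real and eA eB eC :: "nat \<Rightarrow> real"
  shows "(\<Sum>i0\<in>{0,1::nat}. \<Sum>i1\<in>{0,1::nat}. \<Sum>i2\<in>{0,1::nat}.
              (1/8) * (1 + (-1)^(i0+i1) * p + (-1)^(i0+i2) * p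
                         + (-1)^(i1+i2) * r + (-1)^(i0+i1+i2) * s)
              * eA (1+i0) * eB (1+i1) * eC (1+i2)) =
     ((eA 1 + eA 2)/2) * ((eB 1 + eB 2)/2) * ((eC 1 + eC 2)/2)
     + p / 4 * (eA 2 - eA 1) * (eB 2 * eC 2 - eB 1 * eC 1)
     + r / 4 * ((eA 1 + eA 2)/2) * (eB 2 - eB 1) * (eC 2 - eC 1)
     - s / 8 * (eA 2 - eA 1) * (eB 2 - eB 1) * (eC 2 - eC 1)"
proof -
  have e: "eA (Suc (Suc 0)) = eA 2" "eB (Suc (Suc 0)) = eB 2" "eC (Suc (Suc 0)) = eC 2" by (simp_all add: numeral_2_eq_2)
  show ?thesis by (simp add: field_simps e)
qed



lemma os_meas_diag:
  fixes D :: "real measure" and \<phi> :: "real \<Rightarrow> real"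
  assumes "integrable_os D \<phi>" and sD: "sets D = sets borel"
  shows "\<phi> \<in> borel_measurable borel"
proof -
  have "(\<lambda>z. \<phi> (min (fst z) (snd z))) \<in> borel_measurable (D \<Otimes>\<^sub>M D)"
    using assms(1) by (auto simp: integrable_os_def)
  then have m: "(\<lambda>z. \<phi> (min (fst z) (snd z))) \<in> borel_measurable (borel \<Otimes>\<^sub>M borel)"
    by (metis measurable_cong_sets[OF sets_pair_measure_cong[OF sD sD] refl])
  have "(\<lambda>x. (\<lambda>z. \<phi> (min (fst z) (snd z))) (x, x)) \<in> borel_measurable borel"
    by (rule measurable_compose[OF _ m]) simp
  then show ?thesis by simp
qed

lemma mean_os:
  fixes D :: "'b::linorder measure"
  assumes D: "prob_space D" and i: "integrable D \<phi>" and io: "integrable_os D \<phi>"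
  shows "exp_os D 1 \<phi> + exp_os D 2 \<phi> = 2 * integral\<^sup>L D \<phi>"
proof -
  have c: "integrable D (\<lambda>_. 1::real)" using D by (simp add: prob_space_def finite_measure.integrable_const)
  have i1: "integral\<^sup>L D (\<lambda>_. 1::real) = 1" using D by (simp add: prob_space.prob_space)
  note p1 = int_prod2[OF D D i c]
  note p2 = int_prod2[OF D D c i]
  have "exp_os D 1 \<phi> + exp_os D 2 \<phi> =
     integral\<^sup>L (D \<Otimes>\<^sub>M D) (\<lambda>z. \<phi> (min (fst z) (snd z)) + \<phi> (max (fst z) (snd z)))"
    using io by (simp add: exp_os_def integrable_os_def)
  also have "\<dots> = integral\<^sup>L (D \<Otimes>\<^sub>M D) (\<lambda>z. \<phi> (fst z) * 1 + 1 * \<phi> (snd z))"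
    by (rule Bochner_Integration.integral_cong) (auto simp: min_def max_def)
  also have "\<dots> = 2 * integral\<^sup>L D \<phi>"
    using p1 p2 i1 by simp
  finally show ?thesis .
qed

lemma sum4:
  fixes f :: "nat set \<Rightarrow> real"
  shows "(\<Sum>S\<in>fgm_index_sets 3. f S) = f {0,1} + f {0,2} + f {1,2} + f {0,1,2}"
proof -
  have d: "{0::nat,1} \<noteq> {0,2}" "{0::nat,1} \<noteq> {1,2}" "{0::nat,1} \<noteq> {0,1,2}" "{0::nat,2} \<noteq> {1,2}"
     "{0::nat,2} \<noteq> {0,1,2}" "{1::nat,2} \<noteq> {0,1,2}"
     by (auto simp: insert_eq_iff doubleton_eq_iff)
  show ?thesis unfolding fgm_index_sets_3
    by (subst sum.insert, use d in auto)+
qed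



theorem mainTheorem2:
  fixes M :: "'a measure" and N :: "'a \<Rightarrow> nat" and X :: "nat \<Rightarrow> 'a \<Rightarrow> real"
    and \<theta> :: "nat \<Rightarrow> nat set \<Rightarrow> real"
    and \<phi>0 :: "nat \<Rightarrow> real" and \<phi>1 \<phi>2 :: "real \<Rightarrow> real"
  defines "DN \<equiv> distr M (count_space UNIV) N"
      and "DX \<equiv> distr M borel (X 1)"
      and "\<theta>01 \<equiv> \<theta> 2 {0, 1}" and "\<theta>12 \<equiv> \<theta> 2 {1, 2}" and "\<theta>012 \<equiv> \<theta> 2 {0, 1, 2}"
  assumes cls: "crm_FGM_star M N X \<theta>"
    and supA: "le_sup_support 2 M N"
    and int_joint: "integrable M (\<lambda>\<omega>. \<phi>0 (N \<omega>) * \<phi>1 (X 1 \<omega>) * \<phi>2 (X 2 \<omega>))"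
    and int0: "integrable M (\<lambda>\<omega>. \<phi>0 (N \<omega>))"
    and int1: "integrable M (\<lambda>\<omega>. \<phi>1 (X 1 \<omega>))"
    and int2: "integrable M (\<lambda>\<omega>. \<phi>2 (X 1 \<omega>))"
    and int0os: "integrable_os DN \<phi>0"
    and int1os: "integrable_os DX \<phi>1"
    and int2os: "integrable_os DX \<phi>2"
  shows "(\<integral>\<omega>. \<phi>0 (N \<omega>) * \<phi>1 (X 1 \<omega>) * \<phi>2 (X 2 \<omega>) \<partial>M) =
           (\<Sum>i0\<in>{0,1::nat}. \<Sum>i1\<in>{0,1::nat}. \<Sum>i2\<in>{0,1::nat}.
              (1/8) * (1 + (-1)^(i0+i1) * \<theta>01 + (-1)^(i0+i2) * \<theta>01
                         + (-1)^(i1+i2) * \<theta>12 + (-1)^(i0+i1+i2) * \<theta>012)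
              * exp_os DN (1+i0) \<phi>0 * exp_os DX (1+i1) \<phi>1 * exp_os DX (1+i2) \<phi>2)
       \<and> (\<integral>\<omega>. \<phi>0 (N \<omega>) * \<phi>1 (X 1 \<omega>) * \<phi>2 (X 2 \<omega>) \<partial>M) =
           (\<integral>\<omega>. \<phi>0 (N \<omega>) \<partial>M) * (\<integral>\<omega>. \<phi>1 (X 1 \<omega>) \<partial>M) * (\<integral>\<omega>. \<phi>2 (X 1 \<omega>) \<partial>M)
           + \<theta>01 / 4 * Delta DN \<phi>0
               * (exp_os DX 2 \<phi>1 * exp_os DX 2 \<phi>2 - exp_os DX 1 \<phi>1 * exp_os DX 1 \<phi>2)
           + \<theta>12 / 4 * (\<integral>\<omega>. \<phi>0 (N \<omega>) \<partial>M) * Delta DX \<phi>1 * Delta DX \<phi>2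
           - \<theta>012 / 8 * Delta DN \<phi>0 * Delta DX \<phi>1 * Delta DX \<phi>2
       \<and> ((\<integral>\<omega>. \<phi>0 (N \<omega>) \<partial>M) > 0 \<longrightarrow>
           (\<integral>\<omega>. \<phi>0 (N \<omega>) * \<phi>1 (X 1 \<omega>) * \<phi>2 (X 2 \<omega>) \<partial>M) / (\<integral>\<omega>. \<phi>0 (N \<omega>) \<partial>M) =
             (\<integral>\<omega>. \<phi>1 (X 1 \<omega>) \<partial>M) * (\<integral>\<omega>. \<phi>2 (X 1 \<omega>) \<partial>M)
             + \<theta>01 / 4 * (Delta DN \<phi>0 / (\<integral>\<omega>. \<phi>0 (N \<omega>) \<partial>M))
                 * (exp_os DX 2 \<phi>1 * exp_os DX 2 \<phi>2 - exp_os DX 1 \<phi>1 * exp_os DX 1 \<phi>2)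
             + \<theta>12 / 4 * Delta DX \<phi>1 * Delta DX \<phi>2
             - \<theta>012 / 8 * (Delta DN \<phi>0 / (\<integral>\<omega>. \<phi>0 (N \<omega>) \<partial>M)) * Delta DX \<phi>1 * Delta DX \<phi>2)"
proof -
  have crm: "crm M N X" and fgm: "crm_FGM M N X \<theta>" using cls by (auto simp: crm_FGM_star_def crm_FGM_def)
  interpret prob_space M using crm by (simp add: crm_def)
  have Nm[measurable]: "N \<in> M \<rightarrow>\<^sub>M count_space UNIV" using crm by (simp add: crm_def)
  have Xm[measurable]: "X j \<in> borel_measurable M" if "1 \<le> j" for j using crm that by (simp add: crm_def)
  have X1m[measurable]: "X 1 \<in> borel_measurable M" and X2m[measurable]: "X 2 \<in> borel_measurable M" using Xm by auto
  have valid: "fgm_valid 3 (\<theta> 2)"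
    and jc: "\<And>n x. joint_cdf M N X 2 n x = fgm_copula 3 (\<theta> 2) (\<lambda>m. if m = 0 then cdf_N M N n else cdf_X M X (x m))"
    using fgm supA unfolding crm_FGM_def by (auto simp: numeral_3_eq_3 numeral_2_eq_2)
  have perm: "distr M (count_space UNIV \<Otimes>\<^sub>M (\<Pi>\<^sub>M j\<in>{1..2}. borel)) (\<lambda>\<omega>. (N \<omega>, \<lambda>j\<in>{1..2}. X (Transposition.transpose 1 2 j) \<omega>))
         = distr M (count_space UNIV \<Otimes>\<^sub>M (\<Pi>\<^sub>M j\<in>{1..2}. borel)) (\<lambda>\<omega>. (N \<omega>, \<lambda>j\<in>{1..2::nat}. X j \<omega>))"
  proof -
    have tp: "Transposition.transpose 1 2 permutes {1..2::nat}" by (rule permutes_swap_id) auto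
    have A: "\<forall>k\<ge>1. le_sup_support k M N \<longrightarrow>
        (\<forall>\<pi>. \<pi> permutes {1..k} \<longrightarrow>
           distr M (count_space UNIV \<Otimes>\<^sub>M (\<Pi>\<^sub>M j\<in>{1..k}. borel))
              (\<lambda>\<omega>. (N \<omega>, \<lambda>j\<in>{1..k}. X (\<pi> j) \<omega>))
         = distr M (count_space UNIV \<Otimes>\<^sub>M (\<Pi>\<^sub>M j\<in>{1..k}. borel))
              (\<lambda>\<omega>. (N \<omega>, \<lambda>j\<in>{1..k}. X j \<omega>)))"
      using cls unfolding crm_FGM_star_def by (rule conjunct2)
    show ?thesis by (rule A[rule_format, of 2, OF _ supA tp]) simp
  qed

  define th where "th = \<theta> 2"
  define I where "I = {0,1::nat}\<times>{0,1::nat}\<times>{0,1::nat}"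
  define w where "w i = (1/8) * (1 + (-1)^(fst i + fst (snd i)) * th {0,1} + (-1)^(fst i + snd (snd i)) * th {0,2}
       + (-1)^(fst (snd i) + snd (snd i)) * th {1,2} + (-1)^(fst i + fst (snd i) + snd (snd i)) * th {0,1,2})"
    for i :: "nat \<times> nat \<times> nat"
  have Ifin: "finite I" and Ine: "I \<noteq> {}" by (auto simp: I_def)
  have pm1: "(-1::real)^k = 1 \<or> (-1::real)^k = -1" for k :: nat by (cases "even k") simp_all
  have wpos: "0 \<le> w i" if "i \<in> I" for i
  proof -
    obtain i0 i1 i2 where i: "i = (i0, i1, i2)" by (cases i) auto
    define \<epsilon> :: "nat \<Rightarrow> real" where "\<epsilon> j = (if j = 0 then (-1)^i0 else if j = 1 then (-1)^i1 else (-1)^i2)" for j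
    have "\<forall>j<3. \<epsilon> j = 1 \<or> \<epsilon> j = -1" using pm1 by (simp add: \<epsilon>_def)
    then have "0 \<le> 1 + (\<Sum>S\<in>fgm_index_sets 3. th S * (\<Prod>j\<in>S. \<epsilon> j))"
      using valid unfolding fgm_valid_def th_def by blast
    then show ?thesis unfolding sum4 w_def i by (simp add: \<epsilon>_def power_add mult_ac)
  qed
  have DNp: "prob_space DN" unfolding DN_def by (rule prob_space_distr) simp
  have DXp: "prob_space DX" unfolding DX_def by (rule prob_space_distr) simp
  have sDN: "sets DN = sets (count_space UNIV)" unfolding DN_def by simp
  have sDX: "sets DX = sets borel" unfolding DX_def by simp
  have spDN: "space DN = UNIV" unfolding DN_def by simp
  have spDX: "space DX = UNIV" unfolding DX_def by simp
  define AN where "AN j = distr (DN \<Otimes>\<^sub>M DN) borel (\<lambda>z. real (os j z))" for j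
  define BX where "BX j = distr (DX \<Otimes>\<^sub>M DX) borel (\<lambda>z. os j z)" for j
  have sDN2: "sets (DN \<Otimes>\<^sub>M DN) = sets (count_space (UNIV :: (nat \<times> nat) set))"
    by (subst sets_pair_measure_cong[OF sDN sDN], subst pair_measure_countable) auto
  have osNm[measurable]: "(\<lambda>z. real (os j z)) \<in> borel_measurable (DN \<Otimes>\<^sub>M DN)" for j
    by (subst measurable_cong_sets[OF sDN2 refl]) simp
  have osNm2: "(\<lambda>z. os j z) \<in> (DN \<Otimes>\<^sub>M DN) \<rightarrow>\<^sub>M count_space UNIV" for j
    by (subst measurable_cong_sets[OF sDN2 refl]) simp
  have osXm[measurable]: "(\<lambda>z. os j z) \<in> borel_measurable (DX \<Otimes>\<^sub>M DX)" for j
  proof -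
    have "(\<lambda>z::real\<times>real. os j z) \<in> borel_measurable (borel \<Otimes>\<^sub>M borel)"
      unfolding os_def by (cases "j = 0") simp_all
    then show ?thesis by (subst measurable_cong_sets[OF sets_pair_measure_cong[OF sDX sDX] refl])
  qed
  have DNNp: "prob_space (DN \<Otimes>\<^sub>M DN)"
    by (intro prob_space_pair) (auto simp: pair_prob_space_def pair_sigma_finite_def prob_space_imp_sigma_finite DNp)
  have DXXp: "prob_space (DX \<Otimes>\<^sub>M DX)"
    by (intro prob_space_pair) (auto simp: pair_prob_space_def pair_sigma_finite_def prob_space_imp_sigma_finite DXp)
  have ANp: "prob_space (AN j)" "sets (AN j) = sets borel" for j
    unfolding AN_def by (auto intro: prob_space.prob_space_distr DNNp)
  have BXp: "prob_space (BX j)" "sets (BX j) = sets borel" for j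
    unfolding BX_def by (auto intro: prob_space.prob_space_distr DXXp)
  define uN where "uN t = measure DN {v\<in>space DN. real v \<le> t}" for t
  define uX where "uX x = measure DX {v\<in>space DX. v \<le> x}" for x
  have cdfA: "measure (AN j) {..t} = G j (uN t)" for j t
  proof -
    have "measure (AN j) {..t} = measure (DN \<Otimes>\<^sub>M DN) ((\<lambda>z. real (os j z)) -` {..t} \<inter> space (DN \<Otimes>\<^sub>M DN))"
      unfolding AN_def by (rule measure_distr) auto
    also have "\<dots> = measure (DN \<Otimes>\<^sub>M DN) {z\<in>space (DN \<Otimes>\<^sub>M DN). real (os j z) \<le> t}"
      by (rule arg_cong[where f="measure _"]) auto
    also have "\<dots> = G j (uN t)" unfolding uN_def
      by (rule os_cdf[OF DNp]) (auto intro: monoI simp: sDN spDN)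
    finally show ?thesis .
  qed
  have cdfB: "measure (BX j) {..x} = G j (uX x)" for j x
  proof -
    have "measure (BX j) {..x} = measure (DX \<Otimes>\<^sub>M DX) ((\<lambda>z. os j z) -` {..x} \<inter> space (DX \<Otimes>\<^sub>M DX))"
      unfolding BX_def by (rule measure_distr) auto
    also have "\<dots> = measure (DX \<Otimes>\<^sub>M DX) {z\<in>space (DX \<Otimes>\<^sub>M DX). os j z \<le> x}"
      by (rule arg_cong[where f="measure _"]) auto
    also have "\<dots> = G j (uX x)" unfolding uX_def
    proof (rule os_cdf[OF DXp, where f="\<lambda>v. v"])
      have "{v \<in> space DX. v \<le> x} = {..x}" by (auto simp: spDX)
      then show "{v \<in> space DX. v \<le> x} \<in> sets DX" by (simp add: sDX)
    qed (auto intro: monoI)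
    finally show ?thesis .
  qed

  define P where "P = distr M borel (\<lambda>\<omega>. (real (N \<omega>), X 1 \<omega>, X 2 \<omega>))"
  have Tm[measurable]: "(\<lambda>\<omega>. (real (N \<omega>), X 1 \<omega>, X 2 \<omega>)) \<in> borel_measurable M" by measurable
  have Pp: "prob_space P" "sets P = sets borel" unfolding P_def by (auto intro: prob_space_distr)
  have G0: "G j 0 = 0" for j by (simp add: G_def)
  have cdfN: "cdf_N M N n = uN t" if "0 \<le> t" "n = nat \<lfloor>t\<rfloor>" for n t
  proof -
    have e: "real v \<le> t \<longleftrightarrow> v \<le> n" for v using that by linarith
    have "uN t = measure M (N -` {v\<in>space DN. real v \<le> t} \<inter> space M)"
      unfolding uN_def DN_def by (rule measure_distr) auto
    also have "\<dots> = cdf_N M N n" unfolding cdf_N_def e by (rule arg_cong[where f="measure M"]) (auto simp: spDN)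
    finally show ?thesis by simp
  qed
  have cdfXe: "cdf_X M X x = uX x" for x
  proof -
    have "uX x = measure M (X 1 -` {v\<in>space DX. v \<le> x} \<inter> space M)"
      unfolding uX_def DX_def by (rule measure_distr) (auto simp: spDX[unfolded DX_def])
    also have "\<dots> = cdf_X M X x" unfolding cdf_X_def by (rule arg_cong[where f="measure M"]) (auto simp: spDX)
    finally show ?thesis by simp
  qed
  have cdfP: "measure P {..(t, x, y)} = (\<Sum>i\<in>I. w i * (measure (AN (fst i)) {..t} *
                 (measure (BX (fst (snd i))) {..x} * measure (BX (snd (snd i))) {..y})))" for t x y
  proof -
    have "measure P {..(t, x, y)} = measure M ((\<lambda>\<omega>. (real (N \<omega>), X 1 \<omega>, X 2 \<omega>)) -` {..(t, x, y)} \<inter> space M)"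
      unfolding P_def by (rule measure_distr) (auto intro: borel_closed)
    also have "\<dots> = measure M {\<omega>\<in>space M. real (N \<omega>) \<le> t \<and> X 1 \<omega> \<le> x \<and> X 2 \<omega> \<le> y}"
      by (rule arg_cong[where f="measure M"]) (auto simp: less_eq_prod_def)
    finally have mP: "measure P {..(t, x, y)} = measure M {\<omega>\<in>space M. real (N \<omega>) \<le> t \<and> X 1 \<omega> \<le> x \<and> X 2 \<omega> \<le> y}" .
    show ?thesis
    proof (cases "t < 0")
      case True
      have "{\<omega>\<in>space M. real (N \<omega>) \<le> t \<and> X 1 \<omega> \<le> x \<and> X 2 \<omega> \<le> y} = {}" (is "?A = _") using True by auto
      then have z1: "measure P {..(t, x, y)} = 0" unfolding mP by (simp only: measure_empty)
      have "{v\<in>space DN. real v \<le> t} = {}" using True by auto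
      then have z2: "uN t = 0" unfolding uN_def by (simp only: measure_empty)
      show ?thesis unfolding z1 cdfA cdfB z2 by (simp add: G0)
    next
      case False
      define n where "n = nat \<lfloor>t\<rfloor>"
      define xf where "xf m = (if m = (1::nat) then x else y)" for m
      have e: "real v \<le> t \<longleftrightarrow> v \<le> n" for v using False unfolding n_def by linarith
      have i12: "{1..2::nat} = {1,2}" by auto
      have "{\<omega>\<in>space M. real (N \<omega>) \<le> t \<and> X 1 \<omega> \<le> x \<and> X 2 \<omega> \<le> y} =
            {\<omega>\<in>space M. N \<omega> \<le> n \<and> (\<forall>j\<in>{1..2}. X j \<omega> \<le> xf j)}"
        unfolding e i12 xf_def by auto
      then have "measure P {..(t, x, y)} = joint_cdf M N X 2 n xf" unfolding mP joint_cdf_def by simp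
      also have "\<dots> = fgm_copula 3 th (\<lambda>m. if m = 0 then cdf_N M N n else cdf_X M X (xf m))"
        unfolding th_def by (rule jc)
      also have "\<dots> = (\<Sum>i\<in>I. w i * (G (fst i) (uN t) * (G (fst (snd i)) (uX x) * G (snd (snd i)) (uX y))))"
        unfolding copula_mix I_def w_def using cdfN[OF _ n_def] False
        by (simp add: cdfXe xf_def)
      finally show ?thesis unfolding cdfA cdfB .
    qed
  qed

  have g0m[measurable]: "(\<lambda>t::real. \<phi>0 (nat \<lfloor>t\<rfloor>)) \<in> borel_measurable borel" by measurable
  have os_int: "integrable (D \<Otimes>\<^sub>M D) (\<lambda>z. \<phi> (os j z))" if "integrable_os D \<phi>" for D and \<phi> :: "'c::linorder \<Rightarrow> real" and j
    using that by (cases "j = 0") (simp_all add: integrable_os_def os_def)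
  have os_exp: "integral\<^sup>L (D \<Otimes>\<^sub>M D) (\<lambda>z. \<phi> (os j z)) = exp_os D (1 + j) \<phi>" for D and \<phi> :: "'c::linorder \<Rightarrow> real" and j
    by (cases "j = 0") (simp_all add: exp_os_def os_def)
  have iA: "integrable (AN j) (\<lambda>t. \<phi>0 (nat \<lfloor>t\<rfloor>))" for j
    unfolding AN_def using os_int[OF int0os, of j] by (subst integrable_distr_eq) auto
  have eA: "integral\<^sup>L (AN j) (\<lambda>t. \<phi>0 (nat \<lfloor>t\<rfloor>)) = exp_os DN (1 + j) \<phi>0" for j
    unfolding AN_def by (subst integral_distr) (auto simp: os_exp)
  have gen: "(\<integral>\<omega>. \<phi>0 (N \<omega>) * (g1 (X 1 \<omega>) * g2 (X 2 \<omega>)) \<partial>M) =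
     (\<Sum>i\<in>I. w i * (exp_os DN (1 + fst i) \<phi>0 * (exp_os DX (1 + fst (snd i)) g1 * exp_os DX (1 + snd (snd i)) g2)))"
    if io1: "integrable_os DX g1" and io2: "integrable_os DX g2" for g1 g2
  proof -
    have g1m[measurable]: "g1 \<in> borel_measurable borel" by (rule os_meas_diag[OF io1 sDX])
    have g2m[measurable]: "g2 \<in> borel_measurable borel" by (rule os_meas_diag[OF io2 sDX])
    have iB1: "integrable (BX j) g1" for j
      unfolding BX_def using os_int[OF io1, of j] by (subst integrable_distr_eq) auto
    have iB2: "integrable (BX j) g2" for j
      unfolding BX_def using os_int[OF io2, of j] by (subst integrable_distr_eq) auto
    have eB1: "integral\<^sup>L (BX j) g1 = exp_os DX (1 + j) g1" for j
      unfolding BX_def by (subst integral_distr) (auto simp: os_exp)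
    have eB2: "integral\<^sup>L (BX j) g2 = exp_os DX (1 + j) g2" for j
      unfolding BX_def by (subst integral_distr) (auto simp: os_exp)
    note L = L_mix[OF Ifin Ine Pp ANp BXp wpos cdfP iA iB1 iB2]
    have "(\<integral>\<omega>. \<phi>0 (N \<omega>) * (g1 (X 1 \<omega>) * g2 (X 2 \<omega>)) \<partial>M) =
       integral\<^sup>L P (\<lambda>z. \<phi>0 (nat \<lfloor>fst z\<rfloor>) * (g1 (fst (snd z)) * g2 (snd (snd z))))"
    proof -
      have "(\<lambda>z::real\<times>real\<times>real. \<phi>0 (nat \<lfloor>fst z\<rfloor>) * (g1 (fst (snd z)) * g2 (snd (snd z)))) \<in> borel_measurable (borel \<Otimes>\<^sub>M (borel \<Otimes>\<^sub>M borel))"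
      proof -
        have f0[measurable]: "(\<lambda>z::real\<times>real\<times>real. \<phi>0 (nat \<lfloor>fst z\<rfloor>)) \<in> borel_measurable (borel \<Otimes>\<^sub>M (borel \<Otimes>\<^sub>M borel))"
          using measurable_compose[OF measurable_fst g0m] by simp
        have f1[measurable]: "(\<lambda>z::real\<times>real\<times>real. g1 (fst (snd z))) \<in> borel_measurable (borel \<Otimes>\<^sub>M (borel \<Otimes>\<^sub>M borel))"
          using measurable_compose[OF measurable_compose[OF measurable_snd measurable_fst] g1m] by simp
        have f2[measurable]: "(\<lambda>z::real\<times>real\<times>real. g2 (snd (snd z))) \<in> borel_measurable (borel \<Otimes>\<^sub>M (borel \<Otimes>\<^sub>M borel))"
          using measurable_compose[OF measurable_compose[OF measurable_snd measurable_snd] g2m] by simp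
        show ?thesis by (rule borel_measurable_times[OF f0 borel_measurable_times[OF f1 f2]])
      qed
      then have hm: "(\<lambda>z::real\<times>real\<times>real. \<phi>0 (nat \<lfloor>fst z\<rfloor>) * (g1 (fst (snd z)) * g2 (snd (snd z)))) \<in> borel_measurable borel"
        by (simp add: borel_prod)
      show ?thesis unfolding P_def by (subst integral_distr[OF Tm hm]) simp
    qed
    then show ?thesis using L by (simp add: eA eB1 eB2)
  qed

  have one_os: "integrable_os DX (\<lambda>_. 1::real)"
    using DXXp by (simp add: integrable_os_def prob_space_def finite_measure.integrable_const)
  have one_exp: "exp_os DX k (\<lambda>_. 1::real) = 1" for k
    using DXXp by (simp add: exp_os_def prob_space.prob_space)
  have phi2m[measurable]: "\<phi>2 \<in> borel_measurable borel" by (rule os_meas_diag[OF int2os sDX])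
  have phi0m[measurable]: "\<phi>0 \<in> count_space UNIV \<rightarrow>\<^sub>M borel" by simp
  define Dp where "Dp = count_space (UNIV :: nat set) \<Otimes>\<^sub>M (\<Pi>\<^sub>M j\<in>{1..2::nat}. (borel :: real measure))"
  have hm: "(\<lambda>z. \<phi>0 (fst z) * \<phi>2 (snd z 1)) \<in> borel_measurable Dp"
    unfolding Dp_def by measurable
  have tr1: "1 \<le> Transposition.transpose 1 2 j" if "j \<in> {1..2::nat}" for j
    using that by (auto simp: Transposition.transpose_def)
  have m1: "(\<lambda>\<omega>. (N \<omega>, \<lambda>j\<in>{1..2}. X (Transposition.transpose 1 2 j) \<omega>)) \<in> M \<rightarrow>\<^sub>M Dp"
    unfolding Dp_def by (intro measurable_Pair Nm measurable_restrict Xm tr1)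
  have m2: "(\<lambda>\<omega>. (N \<omega>, \<lambda>j\<in>{1..2::nat}. X j \<omega>)) \<in> M \<rightarrow>\<^sub>M Dp"
    unfolding Dp_def by (intro measurable_Pair Nm measurable_restrict Xm) auto
  have exch: "(\<integral>\<omega>. \<phi>0 (N \<omega>) * (1 * \<phi>2 (X 2 \<omega>)) \<partial>M) = (\<integral>\<omega>. \<phi>0 (N \<omega>) * (\<phi>2 (X 1 \<omega>) * 1) \<partial>M)"
  proof -
    have "(\<integral>\<omega>. \<phi>0 (N \<omega>) * (1 * \<phi>2 (X 2 \<omega>)) \<partial>M) =
        integral\<^sup>L (distr M Dp (\<lambda>\<omega>. (N \<omega>, \<lambda>j\<in>{1..2}. X (Transposition.transpose 1 2 j) \<omega>))) (\<lambda>z. \<phi>0 (fst z) * \<phi>2 (snd z 1))"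
      by (subst integral_distr[OF m1 hm]) (simp add: Transposition.transpose_def)
    also have "\<dots> = integral\<^sup>L (distr M Dp (\<lambda>\<omega>. (N \<omega>, \<lambda>j\<in>{1..2::nat}. X j \<omega>))) (\<lambda>z. \<phi>0 (fst z) * \<phi>2 (snd z 1))"
      using perm unfolding Dp_def by simp
    also have "\<dots> = (\<integral>\<omega>. \<phi>0 (N \<omega>) * (\<phi>2 (X 1 \<omega>) * 1) \<partial>M)"
      by (subst integral_distr[OF m2 hm]) simp
    finally show ?thesis .
  qed
  have key: "(th {0,2} - th {0,1}) * (exp_os DN 1 \<phi>0 - exp_os DN 2 \<phi>0) * (exp_os DX 1 \<phi>2 - exp_os DX 2 \<phi>2) = 0"
  proof (rule alg_key[where p="th {0,1}" and q="th {0,2}" and r="th {1,2}" and s="th {0,1,2}"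
        and eA="\<lambda>k. exp_os DN k \<phi>0" and eC="\<lambda>k. exp_os DX k \<phi>2"])
    show "(\<Sum>i\<in>{0,1::nat}\<times>{0,1::nat}\<times>{0,1::nat}.
     (1/8) * (1 + (-1)^(fst i + fst (snd i)) * th {0,1} + (-1)^(fst i + snd (snd i)) * th {0,2}
       + (-1)^(fst (snd i) + snd (snd i)) * th {1,2} + (-1)^(fst i + fst (snd i) + snd (snd i)) * th {0,1,2})
     * (exp_os DN (1 + fst i) \<phi>0 * (1 * exp_os DX (1 + snd (snd i)) \<phi>2))) =
   (\<Sum>i\<in>{0,1::nat}\<times>{0,1::nat}\<times>{0,1::nat}.
     (1/8) * (1 + (-1)^(fst i + fst (snd i)) * th {0,1} + (-1)^(fst i + snd (snd i)) * th {0,2}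
       + (-1)^(fst (snd i) + snd (snd i)) * th {1,2} + (-1)^(fst i + fst (snd i) + snd (snd i)) * th {0,1,2})
     * (exp_os DN (1 + fst i) \<phi>0 * (exp_os DX (1 + fst (snd i)) \<phi>2 * 1)))"
      using gen[OF one_os int2os] gen[OF int2os one_os] exch unfolding I_def w_def one_exp by simp
  qed
  have t: "th {0,1} = \<theta>01" "th {1,2} = \<theta>12" "th {0,1,2} = \<theta>012"
    by (simp_all add: th_def \<theta>01_def \<theta>12_def \<theta>012_def)
  have main1: "(\<integral>\<omega>. \<phi>0 (N \<omega>) * \<phi>1 (X 1 \<omega>) * \<phi>2 (X 2 \<omega>) \<partial>M) =
           (\<Sum>i0\<in>{0,1::nat}. \<Sum>i1\<in>{0,1::nat}. \<Sum>i2\<in>{0,1::nat}.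
              (1/8) * (1 + (-1)^(i0+i1) * \<theta>01 + (-1)^(i0+i2) * \<theta>01
                         + (-1)^(i1+i2) * \<theta>12 + (-1)^(i0+i1+i2) * \<theta>012)
              * exp_os DN (1+i0) \<phi>0 * exp_os DX (1+i1) \<phi>1 * exp_os DX (1+i2) \<phi>2)"
  proof -
    have "(\<integral>\<omega>. \<phi>0 (N \<omega>) * \<phi>1 (X 1 \<omega>) * \<phi>2 (X 2 \<omega>) \<partial>M) = (\<integral>\<omega>. \<phi>0 (N \<omega>) * (\<phi>1 (X 1 \<omega>) * \<phi>2 (X 2 \<omega>)) \<partial>M)"
      by (simp add: mult.assoc)
    also have "\<dots> = (\<Sum>i0\<in>{0,1::nat}. \<Sum>i1\<in>{0,1::nat}. \<Sum>i2\<in>{0,1::nat}.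
              (1/8) * (1 + (-1)^(i0+i1) * \<theta>01 + (-1)^(i0+i2) * \<theta>01
                         + (-1)^(i1+i2) * \<theta>12 + (-1)^(i0+i1+i2) * \<theta>012)
              * exp_os DN (1+i0) \<phi>0 * exp_os DX (1+i1) \<phi>1 * exp_os DX (1+i2) \<phi>2)"
      unfolding gen[OF int1os int2os] I_def w_def t
      by (rule alg_main[where p="\<theta>01" and q="th {0,2}" and r="\<theta>12" and s="\<theta>012"
        and eA="\<lambda>k. exp_os DN k \<phi>0" and eB="\<lambda>k. exp_os DX k \<phi>1" and eC="\<lambda>k. exp_os DX k \<phi>2", OF key[unfolded t]])
    finally show ?thesis .
  qed
  have iDN: "integrable DN \<phi>0" unfolding DN_def using int0 by (subst integrable_distr_eq) auto
  have eN: "(\<integral>\<omega>. \<phi>0 (N \<omega>) \<partial>M) = integral\<^sup>L DN \<phi>0" unfolding DN_def by (subst integral_distr) auto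
  have phi1m[measurable]: "\<phi>1 \<in> borel_measurable borel" by (rule os_meas_diag[OF int1os sDX])
  have iDX1: "integrable DX \<phi>1" unfolding DX_def using int1 by (subst integrable_distr_eq) auto
  have eX1: "(\<integral>\<omega>. \<phi>1 (X 1 \<omega>) \<partial>M) = integral\<^sup>L DX \<phi>1" unfolding DX_def by (subst integral_distr) auto
  have iDX2: "integrable DX \<phi>2" unfolding DX_def using int2 by (subst integrable_distr_eq) auto
  have eX2: "(\<integral>\<omega>. \<phi>2 (X 1 \<omega>) \<partial>M) = integral\<^sup>L DX \<phi>2" unfolding DX_def by (subst integral_distr) auto
  have mN: "(\<integral>\<omega>. \<phi>0 (N \<omega>) \<partial>M) = (exp_os DN 1 \<phi>0 + exp_os DN 2 \<phi>0) / 2"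
    using mean_os[OF DNp iDN int0os] eN by simp
  have mX1: "(\<integral>\<omega>. \<phi>1 (X 1 \<omega>) \<partial>M) = (exp_os DX 1 \<phi>1 + exp_os DX 2 \<phi>1) / 2"
    using mean_os[OF DXp iDX1 int1os] eX1 by simp
  have mX2: "(\<integral>\<omega>. \<phi>2 (X 1 \<omega>) \<partial>M) = (exp_os DX 1 \<phi>2 + exp_os DX 2 \<phi>2) / 2"
    using mean_os[OF DXp iDX2 int2os] eX2 by simp
  have main2: "(\<integral>\<omega>. \<phi>0 (N \<omega>) * \<phi>1 (X 1 \<omega>) * \<phi>2 (X 2 \<omega>) \<partial>M) =
           (\<integral>\<omega>. \<phi>0 (N \<omega>) \<partial>M) * (\<integral>\<omega>. \<phi>1 (X 1 \<omega>) \<partial>M) * (\<integral>\<omega>. \<phi>2 (X 1 \<omega>) \<partial>M)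
           + \<theta>01 / 4 * Delta DN \<phi>0
               * (exp_os DX 2 \<phi>1 * exp_os DX 2 \<phi>2 - exp_os DX 1 \<phi>1 * exp_os DX 1 \<phi>2)
           + \<theta>12 / 4 * (\<integral>\<omega>. \<phi>0 (N \<omega>) \<partial>M) * Delta DX \<phi>1 * Delta DX \<phi>2
           - \<theta>012 / 8 * Delta DN \<phi>0 * Delta DX \<phi>1 * Delta DX \<phi>2"
    unfolding main1 mN mX1 mX2 Delta_def
    by (rule alg_second[where eA="\<lambda>k. exp_os DN k \<phi>0" and eB="\<lambda>k. exp_os DX k \<phi>1" and eC="\<lambda>k. exp_os DX k \<phi>2"])
  have main3: "(\<integral>\<omega>. \<phi>0 (N \<omega>) \<partial>M) > 0 \<longrightarrow>
           (\<integral>\<omega>. \<phi>0 (N \<omega>) * \<phi>1 (X 1 \<omega>) * \<phi>2 (X 2 \<omega>) \<partial>M) / (\<integral>\<omega>. \<phi>0 (N \<omega>) \<partial>M) =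
             (\<integral>\<omega>. \<phi>1 (X 1 \<omega>) \<partial>M) * (\<integral>\<omega>. \<phi>2 (X 1 \<omega>) \<partial>M)
             + \<theta>01 / 4 * (Delta DN \<phi>0 / (\<integral>\<omega>. \<phi>0 (N \<omega>) \<partial>M))
                 * (exp_os DX 2 \<phi>1 * exp_os DX 2 \<phi>2 - exp_os DX 1 \<phi>1 * exp_os DX 1 \<phi>2)
             + \<theta>12 / 4 * Delta DX \<phi>1 * Delta DX \<phi>2
             - \<theta>012 / 8 * (Delta DN \<phi>0 / (\<integral>\<omega>. \<phi>0 (N \<omega>) \<partial>M)) * Delta DX \<phi>1 * Delta DX \<phi>2"
    unfolding main2 by (simp add: field_simps)
  show ?thesis using main1 main2 main3 by blast
qed

end
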